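(* Let $P$ be a finite lattice and let $r:\mathcal{L}_P\to\mathbb{R}_{\ge0}$ satisfy (R.1) $r(f)\le r(g)$ whenever $f\le g$, and (R.2) $r(f+g)=r(f)+r(g)-r(f\cdot g)$ whenever $(f,g)$ is a modular pair in $\mathcal{L}_P$. Then there exists an additive map $\mu:2^P\to\mathbb{R}_{\ge0}$ (i.e. $\mu(S\cup T)=\mu(S)+\mu(T)$ for disjoint $S,T$) such that $r(f)=\mu(P\setminus\Phi f)+r(0)$ for every $f\in\mathcal{L}_P$.
   Context: $P$ is a finite lattice with greatest element $\hat p$. $\mathcal{L}_P$ is the set of maps $f:P\to P$ satisfying (A.1) $a\le f(a)$; (A.2) $a\le b\Rightarrow f(a)\le f(b)$; (A.3) $f(f(a))=f(a)$, ordered pointwise; it is a lattice with join $+$, meet $\cdot$, least element $0$ (identity map). $\Phi f=\{a:f(a)=a\}$. A pair $(f,g)$ in a lattice is a modular pair if $h+(f\cdot g)=(h+f)\cdot g$ for every $h\le g$. *)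

theory Defs
  imports Complex_Main
begin

definition closure_op :: "('a::order \<Rightarrow> 'a) \<Rightarrow> bool" where
  "closure_op f \<longleftrightarrow> (\<forall>a. a \<le> f a) \<and> (\<forall>a b. a \<le> b \<longrightarrow> f a \<le> f b) \<and> (\<forall>a. f (f a) = f a)"

definition cl_join :: "('a::order \<Rightarrow> 'a) \<Rightarrow> ('a \<Rightarrow> 'a) \<Rightarrow> ('a \<Rightarrow> 'a)" where
  "cl_join f g = (THE h. closure_op h \<and> f \<le> h \<and> g \<le> h \<and>
      (\<forall>k. closure_op k \<and> f \<le> k \<and> g \<le> k \<longrightarrow> h \<le> k))"

definition cl_meet :: "('a::order \<Rightarrow> 'a) \<Rightarrow> ('a \<Rightarrow> 'a) \<Rightarrow> ('a \<Rightarrow> 'a)" where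
  "cl_meet f g = (THE h. closure_op h \<and> h \<le> f \<and> h \<le> g \<and>
      (\<forall>k. closure_op k \<and> k \<le> f \<and> k \<le> g \<longrightarrow> k \<le> h))"

definition Phi :: "('a \<Rightarrow> 'a) \<Rightarrow> 'a set" where
  "Phi f = {a. f a = a}"

definition cl_modular_pair :: "('a::order \<Rightarrow> 'a) \<Rightarrow> ('a \<Rightarrow> 'a) \<Rightarrow> bool" where
  "cl_modular_pair f g \<longleftrightarrow>
     (\<forall>h. closure_op h \<and> h \<le> g \<longrightarrow> cl_join h (cl_meet f g) = cl_meet (cl_join h f) g)"

end

theory Submission
  imports Defs
begin


definition topl :: "'a::{finite,lattice}" where "topl = Sup_fin UNIV"

lemma le_topl: "(a::'a::{finite,lattice}) \<le> topl"
  unfolding topl_def by (rule Sup_fin.coboundedI) auto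

definition clF :: "'a::{finite,lattice} set \<Rightarrow> 'a \<Rightarrow> 'a" where
  "clF S a = Inf_fin {y\<in>S. a \<le> y}"

definition moore :: "'a::{finite,lattice} set \<Rightarrow> bool" where
  "moore S \<longleftrightarrow> topl \<in> S \<and> (\<forall>a\<in>S. \<forall>b\<in>S. inf a b \<in> S)"

lemma Inf_fin_closed:
  assumes "finite A" "A \<noteq> {}" "A \<subseteq> S" "\<forall>a\<in>S. \<forall>b\<in>S. inf a b \<in> S"
  shows "Inf_fin A \<in> S"
  using assms
proof (induction A rule: finite_ne_induct)
  case (singleton x) then show ?case by simp
next
  case (insert x F) then show ?case by (simp add: Inf_fin.insert)
qed

lemma clF_props:
  assumes "moore (S::'a::{finite,lattice} set)"
  shows "clF S a \<in> S" "a \<le> clF S a" "y \<in> S \<Longrightarrow> a \<le> y \<Longrightarrow> clF S a \<le> y"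
proof -
  have ne: "{y\<in>S. a \<le> y} \<noteq> {}" using assms le_topl unfolding moore_def by blast
  show "clF S a \<in> S" unfolding clF_def
    by (rule Inf_fin_closed[OF _ ne]) (use assms in \<open>auto simp: moore_def\<close>)
  show "a \<le> clF S a" unfolding clF_def
    by (rule Inf_fin.boundedI[OF _ ne]) auto
  show "y \<in> S \<Longrightarrow> a \<le> y \<Longrightarrow> clF S a \<le> y" unfolding clF_def
    by (rule Inf_fin.coboundedI) auto
qed

lemma clF_fix: "moore S \<Longrightarrow> y \<in> S \<Longrightarrow> clF S y = y"
  using clF_props[of S y] by (simp add: order_antisym)

lemma clF_closure: assumes "moore S" shows "closure_op (clF S)" "Phi (clF S) = S"
proof -
  show "closure_op (clF S)" unfolding closure_op_def
  proof (intro conjI allI impI)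
    fix a show "a \<le> clF S a" using clF_props[OF assms] by blast
  next
    fix a b :: 'a assume "a \<le> b"
    then show "clF S a \<le> clF S b" using clF_props[OF assms, of b] clF_props(3)[OF assms, of "clF S b" a]
      by (meson order_trans)
  next
    fix a show "clF S (clF S a) = clF S a" using clF_fix[OF assms] clF_props(1)[OF assms] by blast
  qed
  show "Phi (clF S) = S" unfolding Phi_def using clF_fix[OF assms] clF_props(1)[OF assms]
    by (metis (mono_tags, lifting) Collect_cong mem_Collect_eq subsetI subset_antisym)
qed

lemma closure_topl: "closure_op f \<Longrightarrow> f topl = topl"
  unfolding closure_op_def using le_topl by (metis order_antisym)

lemma Phi_moore: assumes "closure_op f" shows "moore (Phi f)"
  unfolding moore_def Phi_def
proof (intro conjI ballI)
  show "topl \<in> {a. f a = a}" using closure_topl[OF assms] by simp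
  fix a b assume "a \<in> {a. f a = a}" "b \<in> {a. f a = a}"
  then have fa: "f a = a" and fb: "f b = b" by auto
  have mono: "\<And>x y. x \<le> y \<Longrightarrow> f x \<le> f y" and ext: "\<And>x. x \<le> f x"
    using assms unfolding closure_op_def by blast+
  have "f (inf a b) \<le> f a" "f (inf a b) \<le> f b" by (rule mono, rule inf_le1) (rule mono, rule inf_le2)
  then have "f (inf a b) \<le> inf a b" using fa fb by simp
  then have "f (inf a b) = inf a b" using ext[of "inf a b"] by (rule order_antisym)
  then show "inf a b \<in> {a. f a = a}" by simp
qed

lemma clF_Phi: assumes "closure_op f" shows "clF (Phi f) = f"
proof
  fix a
  have m: "moore (Phi f)" using Phi_moore[OF assms] .
  have "f a \<in> Phi f" "a \<le> f a" using assms unfolding closure_op_def Phi_def by auto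
  then have 1: "clF (Phi f) a \<le> f a" using clF_props(3)[OF m] by blast
  have "f a \<le> f (clF (Phi f) a)" using assms clF_props(2)[OF m, of a] unfolding closure_op_def by blast
  also have "\<dots> = clF (Phi f) a" using clF_props(1)[OF m, of a] unfolding Phi_def by simp
  finally show "clF (Phi f) a = f a" using 1 by simp
qed

lemma join_eq:
  assumes f: "closure_op f" and g: "closure_op g"
  shows "cl_join f g = clF (Phi f \<inter> Phi g)"
proof -
  let ?S = "Phi f \<inter> Phi g"
  have m: "moore ?S" using Phi_moore[OF f] Phi_moore[OF g] unfolding moore_def by auto
  let ?P = "\<lambda>h. closure_op h \<and> f \<le> h \<and> g \<le> h \<and>
      (\<forall>k. closure_op k \<and> f \<le> k \<and> g \<le> k \<longrightarrow> h \<le> k)"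
  have up: "f \<le> clF ?S" if f: "closure_op f" and "?S \<subseteq> Phi f" for f
  proof (rule le_funI)
    fix a
    have "f a \<le> f (clF ?S a)" using f clF_props(2)[OF m, of a] unfolding closure_op_def by blast
    also have "\<dots> = clF ?S a" using clF_props(1)[OF m, of a] that unfolding Phi_def by auto
    finally show "f a \<le> clF ?S a" .
  qed
  have P: "?P (clF ?S)"
  proof (intro conjI allI impI)
    show "closure_op (clF ?S)" using clF_closure[OF m] by blast
    show "f \<le> clF ?S" using up[OF f] by blast
    show "g \<le> clF ?S" using up[OF g] by blast
    fix k assume k: "closure_op k \<and> f \<le> k \<and> g \<le> k"
    show "clF ?S \<le> k"
    proof (rule le_funI)
      fix a
      have kk: "k (k a) = k a" "a \<le> k a" using k unfolding closure_op_def by auto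
      have "f (k a) \<le> k a" "g (k a) \<le> k a" using k kk by (metis le_funD)+
      then have "k a \<in> ?S" using f g unfolding closure_op_def Phi_def by (auto intro: order_antisym)
      then show "clF ?S a \<le> k a" using clF_props(3)[OF m] kk by blast
    qed
  qed
  show ?thesis unfolding cl_join_def
  proof (rule the_equality)
    show "?P (clF ?S)" by (rule P)
    fix h assume "?P h" then show "h = clF ?S" using P by (blast intro: order_antisym)
  qed
qed

lemma meet_eq:
  assumes f: "closure_op f" and g: "closure_op g" and m: "moore (Phi f \<union> Phi g)"
  shows "cl_meet f g = clF (Phi f \<union> Phi g)"
proof -
  let ?S = "Phi f \<union> Phi g"
  let ?P = "\<lambda>h. closure_op h \<and> h \<le> f \<and> h \<le> g \<and>
      (\<forall>k. closure_op k \<and> k \<le> f \<and> k \<le> g \<longrightarrow> k \<le> h)"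
  have lo: "clF ?S \<le> f" if f: "closure_op f" and "Phi f \<subseteq> ?S" for f
  proof (rule le_funI)
    fix a
    have "f a \<in> ?S" "a \<le> f a" using f that unfolding closure_op_def Phi_def by auto
    then show "clF ?S a \<le> f a" using clF_props(3)[OF m] by blast
  qed
  have P: "?P (clF ?S)"
  proof (intro conjI allI impI)
    show "closure_op (clF ?S)" using clF_closure[OF m] by blast
    show "clF ?S \<le> f" using lo[OF f] by blast
    show "clF ?S \<le> g" using lo[OF g] by blast
    fix k assume k: "closure_op k \<and> k \<le> f \<and> k \<le> g"
    show "k \<le> clF ?S"
    proof (rule le_funI)
      fix a
      let ?c = "clF ?S a"
      have "k a \<le> k ?c" using k clF_props(2)[OF m, of a] unfolding closure_op_def by blast
      also have "k ?c \<le> ?c"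
      proof -
        have "?c \<in> ?S" using clF_props(1)[OF m] by blast
        moreover have "k ?c \<le> f ?c" "k ?c \<le> g ?c" using k by (auto simp: le_fun_def)
        ultimately show ?thesis unfolding Phi_def by auto
      qed
      finally show "k a \<le> ?c" .
    qed
  qed
  show ?thesis unfolding cl_meet_def
  proof (rule the_equality)
    show "?P (clF ?S)" by (rule P)
    fix h assume "?P h" then show "h = clF ?S" using P by (blast intro: order_antisym)
  qed
qed


lemma moore_inter: "moore A \<Longrightarrow> moore B \<Longrightarrow> moore (A \<inter> B)"
  unfolding moore_def by auto

lemma moore_pair: "moore {x::'a::{finite,lattice}, topl}"
proof -
  have "inf x topl = x" "inf topl x = x" using le_topl[of x] by (simp_all add: inf_absorb1 inf_absorb2)
  then show ?thesis unfolding moore_def by auto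
qed

lemma step_lemma:
  fixes r :: "('a::{finite, lattice} \<Rightarrow> 'a) \<Rightarrow> real"
  assumes R2: "\<And>f g. closure_op f \<Longrightarrow> closure_op g \<Longrightarrow> cl_modular_pair f g \<Longrightarrow>
               r (cl_join f g) = r f + r g - r (cl_meet f g)"
    and f: "closure_op f" and x: "x \<notin> Phi f"
    and minx: "\<And>b. b \<notin> Phi f \<Longrightarrow> b \<le> x \<Longrightarrow> b = x"
  shows "moore (Phi f \<union> {x})"
    "r (clF {topl}) = r f + r (clF {x, topl}) - r (clF (Phi f \<union> {x}))"
proof -
  let ?G = "Phi f \<union> {x}"
  let ?c = "clF {x, topl}"
  have tf: "topl \<in> Phi f" using closure_topl[OF f] unfolding Phi_def by simp
  show mG: "moore ?G" unfolding moore_def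
  proof (intro conjI ballI)
    show "topl \<in> ?G" using tf by simp
    have mf: "moore (Phi f)" using Phi_moore[OF f] .
    have A: "inf a x \<in> ?G" if "a \<in> Phi f" for a
    proof (cases "inf a x \<in> Phi f")
      case False then have "inf a x = x" using minx[of "inf a x"] by simp
      then show ?thesis by simp
    qed simp
    fix a b assume "a \<in> ?G" "b \<in> ?G"
    then show "inf a b \<in> ?G" using mf A[of a] A[of b] unfolding moore_def
      by (auto simp: inf_commute)
  qed
  have mc: "moore {x, topl}" by (rule moore_pair)
  have c: "closure_op ?c" "Phi ?c = {x, topl}" using clF_closure[OF mc] by auto
  have un: "Phi f \<union> Phi ?c = ?G" using c tf by auto
  have meet: "cl_meet f ?c = clF ?G"
    using meet_eq[OF f c(1)] un mG by simp
  have join: "cl_join f ?c = clF {topl}"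
  proof -
    have "Phi f \<inter> Phi ?c = {topl}" using c tf x by auto
    then show ?thesis using join_eq[OF f c(1)] by simp
  qed
  have mp: "cl_modular_pair f ?c"
    unfolding cl_modular_pair_def
  proof (intro allI impI)
    fix h assume h: "closure_op h \<and> h \<le> ?c"
    have "h x \<le> ?c x" using h by (auto simp: le_fun_def)
    also have "?c x = x" using clF_fix[OF mc] by simp
    finally have hx: "x \<in> Phi h" using h unfolding closure_op_def Phi_def
      by (auto intro: order_antisym)
    have th: "topl \<in> Phi h" using closure_topl h unfolding Phi_def by auto
    have mh: "moore (Phi h \<inter> ?G)" using moore_inter[OF Phi_moore mG] h by auto
    have gc: "closure_op (clF ?G)" "Phi (clF ?G) = ?G" using clF_closure[OF mG] by auto
    have L: "cl_join h (cl_meet f ?c) = clF (Phi h \<inter> ?G)"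
      using meet join_eq[OF _ gc(1), of h] h gc(2) by simp
    have mhf: "moore (Phi h \<inter> Phi f)" using moore_inter[OF Phi_moore Phi_moore] h f by auto
    have jc: "closure_op (clF (Phi h \<inter> Phi f))" "Phi (clF (Phi h \<inter> Phi f)) = Phi h \<inter> Phi f"
      using clF_closure[OF mhf] by auto
    have eqs: "(Phi h \<inter> Phi f) \<union> Phi ?c = Phi h \<inter> ?G" using c hx th tf by auto
    have R: "cl_meet (cl_join h f) ?c = clF (Phi h \<inter> ?G)"
      using join_eq[OF _ f, of h] h meet_eq[OF jc(1) c(1)] jc(2) eqs mh by simp
    show "cl_join h (cl_meet f ?c) = cl_meet (cl_join h f) ?c" using L R by simp
  qed
  show "r (clF {topl}) = r f + r ?c - r (clF ?G)"
    using R2[OF f c(1) mp] join meet by simp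
qed

theorem mainTheorem16:
  fixes r :: "('a::{finite, lattice} \<Rightarrow> 'a) \<Rightarrow> real"
  assumes nonneg: "\<And>f. closure_op f \<Longrightarrow> r f \<ge> 0"
    and R1: "\<And>f g. closure_op f \<Longrightarrow> closure_op g \<Longrightarrow> f \<le> g \<Longrightarrow> r f \<le> r g"
    and R2: "\<And>f g. closure_op f \<Longrightarrow> closure_op g \<Longrightarrow> cl_modular_pair f g \<Longrightarrow>
               r (cl_join f g) = r f + r g - r (cl_meet f g)"
  shows "\<exists>\<mu> :: 'a set \<Rightarrow> real.
           (\<forall>S. \<mu> S \<ge> 0) \<and>
           (\<forall>S T. S \<inter> T = {} \<longrightarrow> \<mu> (S \<union> T) = \<mu> S + \<mu> T) \<and>
           (\<forall>f. closure_op f \<longrightarrow> r f = \<mu> (UNIV - Phi f) + r id)"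
proof -
  define w where "w x = r (clF {topl}) - r (clF {x, topl})" for x :: 'a
  have mt: "moore {topl::'a}" unfolding moore_def by simp
  have wpos: "w x \<ge> 0" for x
  proof -
    have c1: "closure_op (clF {x, topl})" using clF_closure[OF moore_pair] by blast
    have c2: "closure_op (clF {topl::'a})" using clF_closure[OF mt] by blast
    have "clF {x, topl} \<le> clF {topl}"
    proof (rule le_funI)
      fix a have "clF {topl::'a} a = topl" using clF_props(1)[OF mt] by simp
      then show "clF {x, topl} a \<le> clF {topl} a" using le_topl by simp
    qed
    then show ?thesis using R1[OF c1 c2] unfolding w_def by simp
  qed
  have main: "\<forall>f. closure_op f \<longrightarrow> card (UNIV - Phi f) = n \<longrightarrow>
      r f = r id + (\<Sum>x\<in>UNIV - Phi f. w x)" for n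
  proof (induction n)
    case 0
    show ?case
    proof (intro allI impI)
      fix f :: "'a \<Rightarrow> 'a" assume "closure_op f" "card (UNIV - Phi f) = 0"
      then have "UNIV - Phi f = {}" by simp
      moreover have "f = id" using \<open>UNIV - Phi f = {}\<close> unfolding Phi_def by (auto intro!: ext)
      moreover have "(\<Sum>x\<in>UNIV - Phi f. w x) = 0" by (simp only: \<open>UNIV - Phi f = {}\<close> sum.empty)
      ultimately show "r f = r id + (\<Sum>x\<in>UNIV - Phi f. w x)" by simp
    qed
  next
    case (Suc n)
    show ?case
    proof (intro allI impI)
      fix f :: "'a \<Rightarrow> 'a" assume f: "closure_op f" and cn: "card (UNIV - Phi f) = Suc n"
      have "UNIV - Phi f \<noteq> {}"
      proof
        assume "UNIV - Phi f = {}"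
        then have "card (UNIV - Phi f) = 0" by (simp only: card.empty)
        with cn show False by simp
      qed
      then obtain x where xin: "x \<in> UNIV - Phi f"
        and xmin: "\<forall>b\<in>UNIV - Phi f. b \<le> x \<longrightarrow> x = b"
        using finite_has_minimal[OF finite \<open>UNIV - Phi f \<noteq> {}\<close>] by blast
      have x: "x \<notin> Phi f" using xin by simp
      have minx: "\<And>b. b \<notin> Phi f \<Longrightarrow> b \<le> x \<Longrightarrow> b = x" using xmin by blast
      note st = step_lemma[where r=r and f=f and x=x, OF R2 f x minx]
      let ?g = "clF (Phi f \<union> {x})"
      have g: "closure_op ?g" "Phi ?g = Phi f \<union> {x}" using clF_closure[OF st(1)] by auto
      have d: "UNIV - Phi ?g = (UNIV - Phi f) - {x}" using g(2) by blast
      have "card ((UNIV - Phi f) - {x}) = card (UNIV - Phi f) - 1"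
        by (rule card_Diff_singleton[OF xin])
      then have "card (UNIV - Phi ?g) = n" using d cn by simp
      then have rg: "r ?g = r id + (\<Sum>y\<in>UNIV - Phi ?g. w y)" using Suc.IH g(1) by blast
      have "(\<Sum>y\<in>UNIV - Phi f. w y) = w x + (\<Sum>y\<in>(UNIV - Phi f) - {x}. w y)"
        by (rule sum.remove[OF finite xin])
      moreover have "r f = r ?g + w x" using st(2) unfolding w_def by linarith
      moreover have "r ?g = r id + (\<Sum>y\<in>(UNIV - Phi f) - {x}. w y)" using rg d by (simp only:)
      ultimately show "r f = r id + (\<Sum>y\<in>UNIV - Phi f. w y)"
        by linarith
    qed
  qed
  show ?thesis
  proof (intro exI[of _ "\<lambda>S. \<Sum>x\<in>S. w x"] conjI allI impI)
    fix S :: "'a set" show "0 \<le> (\<Sum>x\<in>S. w x)" using wpos by (simp add: sum_nonneg)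
  next
    fix S T :: "'a set" assume "S \<inter> T = {}"
    then show "(\<Sum>x\<in>S \<union> T. w x) = (\<Sum>x\<in>S. w x) + (\<Sum>x\<in>T. w x)"
      by (simp add: sum.union_disjoint)
  next
    fix f :: "'a \<Rightarrow> 'a" assume "closure_op f"
    then show "r f = (\<Sum>x\<in>UNIV - Phi f. w x) + r id" using main[of "card (UNIV - Phi f)"] by (simp add: add.commute)
  qed
qed

end
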